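(* Let $S$ be an additively reduced semidomain and $G$ a torsion-free abelian group. Let $f=\sum_{i=0}^n s_ix^{g_i}\in S[G]$ with $g_0>g_1>\dots>g_n$ and $s_i\in S\setminus\{0\}$. Then: (1) if $|\operatorname{supp}(f)|\ge2$ and $2g_1<g_0+g_n$, then $f$ is monolithic; (2) if $|\operatorname{supp}(f)|>3$ and $2g_1\le g_0+g_n$, then $f$ is monolithic.
   Context: A semidomain is a subsemiring (containing $0$ and $1$) of an integral domain. $S$ is additively reduced if $0$ is the only invertible element of $(S,+)$. $G$ carries a fixed total order compatible with addition. $S[G]$ is the semidomain of formal finite sums $\sum_{g\in G}s_gx^g$ with polynomial operations; $\operatorname{supp}(f)$ is the set of exponents with nonzero coefficient. A nonzero $f\in S[G]$ is monolithic if whenever $f=pq$ with $p,q\in S[G]$, one of $p,q$ is a monomial $sx^g$. *)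

theory Defs
  imports "HOL-Library.Poly_Mapping"
begin

definition semidomain :: "'a::idom set \<Rightarrow> bool" where
  "semidomain S \<longleftrightarrow> 0 \<in> S \<and> 1 \<in> S \<and> (\<forall>a\<in>S. \<forall>b\<in>S. a + b \<in> S \<and> a * b \<in> S)"

definition additively_reduced :: "'a::idom set \<Rightarrow> bool" where
  "additively_reduced S \<longleftrightarrow> (\<forall>a\<in>S. (\<exists>b\<in>S. a + b = 0) \<longrightarrow> a = 0)"

text \<open>The semigroup semiring S[G], viewed inside the group ring of G over the ambient domain:
  finitely supported functions G \<rightarrow> R with all coefficients in S; multiplication is convolution.\<close>
definition group_semiring :: "'a::idom set \<Rightarrow> ('g::linordered_ab_group_add \<Rightarrow>\<^sub>0 'a) set" where
  "group_semiring S = {f. \<forall>g. Poly_Mapping.lookup f g \<in> S}"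

definition is_monomial :: "('g::linordered_ab_group_add \<Rightarrow>\<^sub>0 'a::idom) \<Rightarrow> bool" where
  "is_monomial p \<longleftrightarrow> (\<exists>s g. p = Poly_Mapping.single g s)"

definition monolithic :: "'a::idom set \<Rightarrow> ('g::linordered_ab_group_add \<Rightarrow>\<^sub>0 'a) \<Rightarrow> bool" where
  "monolithic S f \<longleftrightarrow> f \<in> group_semiring S \<and> f \<noteq> 0 \<and>
     (\<forall>p\<in>group_semiring S. \<forall>q\<in>group_semiring S. f = p * q \<longrightarrow> is_monomial p \<or> is_monomial q)"

end

theory Submission imports Defs begin

lemma sum_in_S:
  assumes "semidomain S" "finite F" "\<And>x. x \<in> F \<Longrightarrow> t x \<in> S"
  shows "sum t F \<in> S"
  using assms(2,3)
proof (induction F rule: finite_induct)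
  case empty then show ?case using assms(1) by (simp add: semidomain_def)
next
  case (insert x F) then show ?case using assms(1) by (simp add: semidomain_def)
qed

lemma sum_ne0:
  assumes "semidomain S" "additively_reduced S" "finite F" "\<And>x. x \<in> F \<Longrightarrow> t x \<in> S"
    "y \<in> F" "t y \<noteq> 0"
  shows "sum t F \<noteq> 0"
proof
  assume h: "sum t F = 0"
  have "sum t F = t y + sum t (F - {y})" using assms(3,5) by (simp add: sum.remove)
  moreover have "sum t (F - {y}) \<in> S" using sum_in_S[OF assms(1)] assms(3,4) by auto
  ultimately show False using h assms(2,4,5,6) unfolding additively_reduced_def by metis
qed

lemma lookup_mult_sum:
  "Poly_Mapping.lookup (p * q) k =
     (\<Sum>(a,b)\<in>Poly_Mapping.keys p \<times> Poly_Mapping.keys q. Poly_Mapping.lookup p a * Poly_Mapping.lookup q b when k = a + b)"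
proof -
  have "Poly_Mapping.lookup (p * q) k = prod_fun (Poly_Mapping.lookup p) (Poly_Mapping.lookup q) k"
    by (simp add: times_poly_mapping.rep_eq)
  also have "\<dots> = (\<Sum>(a, b). Poly_Mapping.lookup p a * Poly_Mapping.lookup q b when k = a + b)"
    by (rule prod_fun_unfold_prod) (simp_all add: keys_def[symmetric])
  also have "\<dots> = (\<Sum>(a,b)\<in>Poly_Mapping.keys p \<times> Poly_Mapping.keys q. Poly_Mapping.lookup p a * Poly_Mapping.lookup q b when k = a + b)"
    by (rule Sum_any.expand_superset) (auto simp: in_keys_iff)
  finally show ?thesis .
qed

lemma keys_mult_eq:
  fixes p q :: "'g::linordered_ab_group_add \<Rightarrow>\<^sub>0 'a::idom"
  assumes "semidomain S" "additively_reduced S" "p \<in> group_semiring S" "q \<in> group_semiring S"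
    "a \<in> Poly_Mapping.keys p" "b \<in> Poly_Mapping.keys q"
  shows "a + b \<in> Poly_Mapping.keys (p * q)"
proof -
  have "(\<Sum>(x,y)\<in>Poly_Mapping.keys p \<times> Poly_Mapping.keys q. Poly_Mapping.lookup p x * Poly_Mapping.lookup q y when a + b = x + y) \<noteq> 0"
  proof (rule sum_ne0[OF assms(1,2)])
    show "(a,b) \<in> Poly_Mapping.keys p \<times> Poly_Mapping.keys q" using assms by auto
    show "(case (a, b) of (x, y) \<Rightarrow> Poly_Mapping.lookup p x * Poly_Mapping.lookup q y when a + b = x + y) \<noteq> 0"
      using assms(5,6) by (simp add: in_keys_iff)
    fix z assume "z \<in> Poly_Mapping.keys p \<times> Poly_Mapping.keys q"
    show "(case z of (x, y) \<Rightarrow> Poly_Mapping.lookup p x * Poly_Mapping.lookup q y when a + b = x + y) \<in> S"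
      using assms(1,3,4) by (cases z) (auto simp: when_def semidomain_def group_semiring_def)
  qed simp
  then show ?thesis by (simp add: lookup_mult_sum in_keys_iff)
qed


lemma nonmono_keys:
  assumes "\<not> is_monomial p"
  shows "\<exists>a\<in>Poly_Mapping.keys p. \<exists>b\<in>Poly_Mapping.keys p. a \<noteq> b"
proof (rule ccontr)
  assume "\<not> ?thesis"
  then obtain a where "Poly_Mapping.keys p \<subseteq> {a}" by blast
  then have "p = Poly_Mapping.single a (Poly_Mapping.lookup p a)"
    by (intro poly_mapping_eqI) (auto simp: lookup_single when_def in_keys_iff)
  then show False using assms unfolding is_monomial_def by blast
qed

lemma keys_struct:
  fixes p :: "'g::linordered_ab_group_add \<Rightarrow>\<^sub>0 'a::idom"
  assumes "\<not> is_monomial p"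
  obtains a0 a1 a' where "a0 \<in> Poly_Mapping.keys p" "a1 \<in> Poly_Mapping.keys p" "a' \<in> Poly_Mapping.keys p"
    "a1 < a0" "a' \<le> a1" "\<And>x. x \<in> Poly_Mapping.keys p \<Longrightarrow> x \<le> a0"
    "\<And>x. x \<in> Poly_Mapping.keys p \<Longrightarrow> a' \<le> x"
    "\<And>x. x \<in> Poly_Mapping.keys p \<Longrightarrow> x \<noteq> a0 \<Longrightarrow> x \<le> a1"
proof -
  let ?K = "Poly_Mapping.keys p"
  obtain u v where uv: "u \<in> ?K" "v \<in> ?K" "u \<noteq> v" using nonmono_keys[OF assms] by blast
  have fin: "finite ?K" by simp
  have ne: "?K \<noteq> {}" using uv by auto
  define a0 where "a0 = Max ?K"
  define a' where "a' = Min ?K"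
  have ne2: "?K - {a0} \<noteq> {}" using uv by auto
  define a1 where "a1 = Max (?K - {a0})"
  have a0: "a0 \<in> ?K" "\<And>x. x \<in> ?K \<Longrightarrow> x \<le> a0" using fin ne by (auto simp: a0_def)
  have a': "a' \<in> ?K" "\<And>x. x \<in> ?K \<Longrightarrow> a' \<le> x" using fin ne by (auto simp: a'_def)
  have a1: "a1 \<in> ?K - {a0}" "\<And>x. x \<in> ?K - {a0} \<Longrightarrow> x \<le> a1"
    unfolding a1_def using fin ne2 by (intro Max_in; simp) (intro Max_ge; simp)
  have "a1 < a0" using a1(1) a0(2)[of a1] by auto
  show ?thesis
    by (rule that[of a0 a1 a']) (use a0 a' a1 \<open>a1 < a0\<close> in auto)
qed

theorem lemma3p2:
  fixes S :: "'a::idom set"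
    and g :: "nat \<Rightarrow> 'g::linordered_ab_group_add"
    and s :: "nat \<Rightarrow> 'a"
    and n :: nat
    and f :: "'g \<Rightarrow>\<^sub>0 'a"
  assumes "semidomain S"
    and "additively_reduced S"
    and "\<And>i j. i < j \<Longrightarrow> j \<le> n \<Longrightarrow> g j < g i"
    and "\<And>i. i \<le> n \<Longrightarrow> s i \<in> S - {0}"
    and "f = (\<Sum>i\<le>n. Poly_Mapping.single (g i) (s i))"
  shows "(card (Poly_Mapping.keys f) \<ge> 2 \<and> g 1 + g 1 < g 0 + g n \<longrightarrow> monolithic S f)
       \<and> (card (Poly_Mapping.keys f) > 3 \<and> g 1 + g 1 \<le> g 0 + g n \<longrightarrow> monolithic S f)"
proof -
  note gm = assms(3)
  have inj: "i = j" if "i \<le> n" "j \<le> n" "g i = g j" for i j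
    using gm[of i j] gm[of j i] that by (cases i j rule: linorder_cases) auto
  have lk: "Poly_Mapping.lookup f x = (\<Sum>i\<le>n. if g i = x then s i else 0)" for x
    by (simp add: assms(5) lookup_sum lookup_single when_def)
  have lkg: "Poly_Mapping.lookup f (g j) = s j" if "j \<le> n" for j
  proof -
    have "(\<Sum>i\<le>n. if g i = g j then s i else 0) = (\<Sum>i\<le>n. if i = j then s i else 0)"
      by (rule sum.cong) (use inj that in auto)
    then show ?thesis using that by (simp add: lk)
  qed
  have lk0: "Poly_Mapping.lookup f x = 0" if "x \<notin> g ` {..n}" for x
    using that by (auto simp: lk intro!: sum.neutral)
  have keysf: "Poly_Mapping.keys f = g ` {..n}"
  proof
    show "Poly_Mapping.keys f \<subseteq> g ` {..n}" using lk0 by (auto simp: in_keys_iff)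
    show "g ` {..n} \<subseteq> Poly_Mapping.keys f" using lkg assms(4) by (auto simp: in_keys_iff)
  qed
  have fS: "f \<in> group_semiring S"
    unfolding group_semiring_def
  proof (intro CollectI allI)
    fix x show "Poly_Mapping.lookup f x \<in> S"
    proof (cases "x \<in> g ` {..n}")
      case True then obtain j where "j \<le> n" "x = g j" by auto
      then show ?thesis using lkg assms(4) by auto
    next
      case False then show ?thesis using lk0 assms(1) by (simp add: semidomain_def)
    qed
  qed
  have f0: "f \<noteq> 0" using lkg[of 0] assms(4)[of 0] by auto
  have g0max: "x \<le> g 0" if xk: "x \<in> Poly_Mapping.keys f" for x
  proof -
    obtain i where "i \<le> n" "x = g i" using xk keysf by auto
    then show ?thesis using gm[of 0 i] by (cases i) auto
  qed
  have gnmin: "g n \<le> x" if xk: "x \<in> Poly_Mapping.keys f" for x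
  proof -
    obtain i where "i \<le> n" "x = g i" using xk keysf by auto
    then show ?thesis using gm[of i n] by (cases "i = n") auto
  qed
  have g1: "x \<le> g 1" if xk: "x \<in> Poly_Mapping.keys f" and x0: "x \<noteq> g 0" for x
  proof -
    obtain i where "i \<le> n" "x = g i" using xk keysf by auto
    then show ?thesis using gm[of 1 i] x0 by (cases "i = 1"; cases i) auto
  qed
  have g0k: "g 0 \<in> Poly_Mapping.keys f" and gnk: "g n \<in> Poly_Mapping.keys f" using keysf by auto
  have core: "g 0 + g n \<le> g 1 + g 1 \<and> (g 1 + g 1 = g 0 + g n \<longrightarrow> card (Poly_Mapping.keys f) \<le> 3)"
    if pS: "p \<in> group_semiring S" and qS: "q \<in> group_semiring S" and fpq: "f = p * q"
      and np: "\<not> is_monomial p" and nq: "\<not> is_monomial q" for p q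
  proof -
    have kf: "Poly_Mapping.keys f = {a + b | a b. a \<in> Poly_Mapping.keys p \<and> b \<in> Poly_Mapping.keys q}"
      using keys_mult[of p q] keys_mult_eq[OF assms(1,2) pS qS] fpq by blast
    obtain a0 a1 a' where A: "a0 \<in> Poly_Mapping.keys p" "a1 \<in> Poly_Mapping.keys p" "a' \<in> Poly_Mapping.keys p"
      "a1 < a0" "a' \<le> a1" "\<And>x. x \<in> Poly_Mapping.keys p \<Longrightarrow> x \<le> a0"
      "\<And>x. x \<in> Poly_Mapping.keys p \<Longrightarrow> a' \<le> x"
      "\<And>x. x \<in> Poly_Mapping.keys p \<Longrightarrow> x \<noteq> a0 \<Longrightarrow> x \<le> a1"
      using keys_struct[OF np] by metis
    obtain b0 b1 b' where B: "b0 \<in> Poly_Mapping.keys q" "b1 \<in> Poly_Mapping.keys q" "b' \<in> Poly_Mapping.keys q"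
      "b1 < b0" "b' \<le> b1" "\<And>x. x \<in> Poly_Mapping.keys q \<Longrightarrow> x \<le> b0"
      "\<And>x. x \<in> Poly_Mapping.keys q \<Longrightarrow> b' \<le> x"
      "\<And>x. x \<in> Poly_Mapping.keys q \<Longrightarrow> x \<noteq> b0 \<Longrightarrow> x \<le> b1"
      using keys_struct[OF nq] by metis
    have G0: "g 0 = a0 + b0"
    proof (rule antisym)
      show "a0 + b0 \<le> g 0" using g0max kf A(1) B(1) by blast
      obtain x y where "g 0 = x + y" "x \<in> Poly_Mapping.keys p" "y \<in> Poly_Mapping.keys q" using g0k kf by blast
      then show "g 0 \<le> a0 + b0" using A(6) B(6) by (simp add: add_mono)
    qed
    have GN: "g n = a' + b'"
    proof (rule antisym)
      show "g n \<le> a' + b'" using gnmin kf A(3) B(3) by blast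
      obtain x y where "g n = x + y" "x \<in> Poly_Mapping.keys p" "y \<in> Poly_Mapping.keys q" using gnk kf by blast
      then show "a' + b' \<le> g n" using A(7) B(7) by (simp add: add_mono)
    qed
    have X: "a1 + b0 \<le> g 1"
      using g1[of "a1 + b0"] kf A B G0 by (auto)
    have Y: "a0 + b1 \<le> g 1"
      using g1[of "a0 + b1"] kf A B G0 by (auto)
    have S1: "g 0 + g n = (a' + b0) + (a0 + b')" using G0 GN by (simp add: ac_simps)
    have S2: "(a' + b0) + (a0 + b') \<le> (a1 + b0) + (a0 + b1)" using A(5) B(5) by (intro add_mono) auto
    have S3: "(a1 + b0) + (a0 + b1) \<le> g 1 + g 1" using X Y by (rule add_mono)
    have S4: "g 0 + g n \<le> (a1 + b0) + (a0 + b1)" using S1 S2 by simp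
    have main: "g 0 + g n \<le> g 1 + g 1" using S4 S3 by (rule order_trans)
    moreover have "card (Poly_Mapping.keys f) \<le> 3" if eq: "g 1 + g 1 = g 0 + g n"
    proof -
      have X': "a1 + b0 = g 1"
      proof (rule ccontr)
        assume "a1 + b0 \<noteq> g 1"
        then have "(a1 + b0) + (a0 + b1) < g 1 + g 1" using X Y by (intro add_less_le_mono) auto
        then show False using eq S4 by simp
      qed
      have Y': "a0 + b1 = g 1"
      proof (rule ccontr)
        assume "a0 + b1 \<noteq> g 1"
        then have "(a1 + b0) + (a0 + b1) < g 1 + g 1" using X Y by (intro add_le_less_mono) auto
        then show False using eq S4 by simp
      qed
      have E1: "a' = a1"
      proof (rule ccontr)
        assume "a' \<noteq> a1"
        then have "(a' + b0) + (a0 + b') < (a1 + b0) + (a0 + b1)" using A(5) B(5) by (intro add_less_le_mono) auto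
        then show False using eq X' Y' S1 by simp
      qed
      have E2: "b' = b1"
      proof (rule ccontr)
        assume "b' \<noteq> b1"
        then have "(a' + b0) + (a0 + b') < (a1 + b0) + (a0 + b1)" using A(5) B(5) by (intro add_le_less_mono) auto
        then show False using eq X' Y' S1 by simp
      qed
      have kp: "Poly_Mapping.keys p \<subseteq> {a0, a1}"
        using A(7,8) E1 by (metis antisym insertCI subsetI)
      have kq: "Poly_Mapping.keys q \<subseteq> {b0, b1}"
        using B(7,8) E2 by (metis antisym insertCI subsetI)
      have "Poly_Mapping.keys f \<subseteq> {a0 + b0, a1 + b0, a1 + b1}"
        using kf kp kq X' Y' by auto
      then have "card (Poly_Mapping.keys f) \<le> card {a0 + b0, a1 + b0, a1 + b1}"
        by (rule card_mono[rotated]) simp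
      also have "\<dots> \<le> 3" by (simp add: card_insert_if)
      finally show ?thesis .
    qed
    ultimately show ?thesis by blast
  qed
  have p1: "monolithic S f" if "g 1 + g 1 < g 0 + g n"
    unfolding monolithic_def using fS f0 core that by (meson not_le)
  have p2: "monolithic S f" if "card (Poly_Mapping.keys f) > 3" "g 1 + g 1 \<le> g 0 + g n"
    unfolding monolithic_def using fS f0 core that by (metis antisym not_le)
  show ?thesis using p1 p2 by blast
qed

end
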